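(* Let $f:\mathbb{R}^n\to\mathbb{R}^n$ and $\mu\ge0$. Suppose that: (i) $f$ is continuous on $\mathbb{R}^n$; (ii) for every $x\in\mathbb{R}^n$, $f$ admits a strict $\eta_x$-estimator $g_x$ at $x$ (for some $\eta_x\ge0$) which is metrically injective around $x$ with $\operatorname{inj}(g_x,x)>\eta_x$; (iii) for every $x\in\mathbb{R}^n$, $f$ admits a strict $\mu$-estimator $h_x$ at $x$, and $$\sigma_f:=\inf_{x\in\mathbb{R}^n}\operatorname{lop}(h_x,x)>\mu.$$ Then $f$ is a bijection of $\mathbb{R}^n$ onto $\mathbb{R}^n$, and $f^{-1}:\mathbb{R}^n\to\mathbb{R}^n$ is Lipschitz continuous on $\mathbb{R}^n$ with constant $(\sigma_f-\mu)^{-1}$.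
   Context: $B(x,r)$ and $B^\circ(x,r)$ denote the closed and open balls. For a mapping $f:\mathbb{R}^n\to\mathbb{R}^m$, $\operatorname{lip}(f,\bar x)$ is the infimum of all $\ell>0$ for which there is a neighbourhood $U$ of $\bar x$ with $\|f(x_1)-f(x_2)\|\le\ell\|x_1-x_2\|$ for all $x_1,x_2\in U$ ($+\infty$ if none). Given $\mu\ge0$, $h:\mathbb{R}^n\to\mathbb{R}^m$ is a strict $\mu$-estimator of $f$ at $\bar x$ if $h(\bar x)=f(\bar x)$ and $\operatorname{lip}(f-h,\bar x)\le\mu$. A mapping $g$ is metrically injective around $\bar x$ if there exist $\beta,\delta>0$ with $\|g(x_1)-g(x_2)\|\ge\beta\|x_1-x_2\|$ for all $x_1,x_2\in B(\bar x,\delta)$; $\operatorname{inj}(g,\bar x)$ is the supremum of such $\beta$. The linear openness bound $\operatorname{lop}(h,\bar x)$ is the supremum of all $\alpha>0$ for which there exist neighbourhoods $U$ of $\bar x$ and $V$ of $h(\bar x)$ such that $B^\circ(h(x),\alpha r)\cap V\subseteq h(B^\circ(x,r))$ for all $x\in U$ and all $r>0$ (it is $0$ if no such $\alpha$ exists). *)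

theory Defs
  imports "HOL-Analysis.Analysis"
begin

text \<open>Lipschitz modulus lip(f, xb), valued in the extended reals (infinity if no such l).\<close>
definition lip_mod :: "('a::real_normed_vector \<Rightarrow> 'b::real_normed_vector) \<Rightarrow> 'a \<Rightarrow> ereal" where
  "lip_mod f xb = Inf (ereal ` {l. l > 0 \<and> (\<exists>U. open U \<and> xb \<in> U \<and>
      (\<forall>x1\<in>U. \<forall>x2\<in>U. norm (f x1 - f x2) \<le> l * norm (x1 - x2)))})"

definition strict_estimator ::
  "('a::real_normed_vector \<Rightarrow> 'b::real_normed_vector) \<Rightarrow> ('a \<Rightarrow> 'b) \<Rightarrow> real \<Rightarrow> 'a \<Rightarrow> bool" where
  "strict_estimator f h mu xb \<longleftrightarrow> h xb = f xb \<and> lip_mod (\<lambda>x. f x - h x) xb \<le> ereal mu"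

definition metrically_injective ::
  "('a::real_normed_vector \<Rightarrow> 'b::real_normed_vector) \<Rightarrow> 'a \<Rightarrow> bool" where
  "metrically_injective g xb \<longleftrightarrow> (\<exists>\<beta>>0. \<exists>\<delta>>0. \<forall>x1\<in>cball xb \<delta>. \<forall>x2\<in>cball xb \<delta>.
      norm (g x1 - g x2) \<ge> \<beta> * norm (x1 - x2))"

definition inj_bound :: "('a::real_normed_vector \<Rightarrow> 'b::real_normed_vector) \<Rightarrow> 'a \<Rightarrow> ereal" where
  "inj_bound g xb = Sup (ereal ` {\<beta>. \<beta> > 0 \<and> (\<exists>\<delta>>0. \<forall>x1\<in>cball xb \<delta>. \<forall>x2\<in>cball xb \<delta>.
      norm (g x1 - g x2) \<ge> \<beta> * norm (x1 - x2))})"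

definition lop :: "('a::real_normed_vector \<Rightarrow> 'b::real_normed_vector) \<Rightarrow> 'a \<Rightarrow> ereal" where
  "lop h xb = Sup (insert 0 (ereal ` {\<alpha>. \<alpha> > 0 \<and> (\<exists>U V. open U \<and> xb \<in> U \<and> open V \<and> h xb \<in> V \<and>
      (\<forall>x\<in>U. \<forall>r>0. ball (h x) (\<alpha> * r) \<inter> V \<subseteq> h ` ball x r))}))"

end

theory Submission
  imports Defs
begin

lemma geo_bound:
  fixes q :: real assumes "0 \<le> q" "q < 1" "0 \<le> a"
  shows "a * (\<Sum>j<k. q^j) \<le> a / (1 - q)"
proof -
  have "(\<Sum>j<k. q^j) = (1 - q^k) / (1 - q)"
    using assms by (subst geometric_sum) (auto simp: field_simps)
  also have "\<dots> \<le> 1 / (1 - q)" using assms by (auto simp: divide_right_mono)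
  finally show ?thesis using assms by (metis mult_left_mono times_divide_eq_right mult_1_right)
qed

lemma pert:
  fixes f h :: "'a::euclidean_space \<Rightarrow> 'a"
  assumes contf: "continuous_on UNIV f"
    and U: "open U" "z \<in> U" and V: "open V" "h z \<in> V"
    and \<alpha>: "0 < \<alpha>"
    and hopen: "\<forall>x\<in>U. \<forall>r>0. ball (h x) (\<alpha>*r) \<inter> V \<subseteq> h ` ball x r"
    and elip: "\<forall>x1\<in>U. \<forall>x2\<in>U. norm ((f x1 - h x1) - (f x2 - h x2)) \<le> m * norm (x1 - x2)"
    and m: "0 \<le> m" and c: "0 < c" "c + m < \<alpha>"
  shows "\<exists>\<delta>>0. \<forall>w\<in>ball z \<delta>. \<forall>r. 0 < r \<longrightarrow> r \<le> \<delta> \<longrightarrow> ball (f w) (c*r) \<subseteq> f ` ball w r"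
proof -
  define c1 where "c1 = (\<alpha> + (c + m)) / 2"
  have c1: "c + m < c1" "c1 < \<alpha>" "0 < c1" "m < c1" using c m by (auto simp: c1_def)
  define q where "q = m / c1"
  have q: "0 \<le> q" "q < 1" using c1 m by (auto simp: q_def)
  have step: "\<exists>x'. h x' = t \<and> norm (x' - x) \<le> norm (t - h x) / c1" if xU: "x \<in> U" and tV: "t \<in> V" for x t
  proof (cases "t = h x")
    case True then show ?thesis by (intro exI[of _ x]) auto
  next
    case False
    define s where "s = norm (t - h x) / c1"
    have s: "s > 0" using False c1 by (simp add: s_def)
    have "norm (t - h x) = c1 * s" using c1 by (simp add: s_def)
    also have "\<dots> < \<alpha> * s" using c1 s by simp
    finally have "t \<in> ball (h x) (\<alpha> * s) \<inter> V" using that by (simp add: dist_norm norm_minus_commute)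
    then obtain x' where "x' \<in> ball x s" "t = h x'" using hopen xU s by blast
    then show ?thesis
      by (intro exI[of _ x']) (auto simp: s_def dist_norm norm_minus_commute)
  qed
  obtain \<rho> where \<rho>: "\<rho> > 0" "ball z \<rho> \<subseteq> U" using U open_contains_ball by blast
  obtain \<epsilon> where \<epsilon>: "\<epsilon> > 0" "ball (h z) \<epsilon> \<subseteq> V" using V open_contains_ball by blast
  have "isCont f z" using contf continuous_on_eq_continuous_at by blast
  then obtain \<delta>f where \<delta>f: "\<delta>f > 0" "\<forall>w. dist w z < \<delta>f \<longrightarrow> dist (f w) (f z) < \<epsilon>/4"
    using \<epsilon> unfolding continuous_at_eps_delta by (metis zero_less_divide_iff zero_less_numeral)
  define \<delta> where "\<delta> = min (min (\<rho>/2) \<delta>f) (\<epsilon> / (4*(c + 2*m + 1)))"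
  have \<delta>: "\<delta> > 0" using \<rho> \<delta>f \<epsilon> c m by (simp add: \<delta>_def)
  have \<delta>le: "\<delta> \<le> \<epsilon> / (4*(c + 2*m + 1))" "\<delta> \<le> \<rho>/2" "\<delta> \<le> \<delta>f"
  proof -
    have a: "\<delta> \<le> min (\<rho>/2) \<delta>f" "\<delta> \<le> \<epsilon> / (4*(c + 2*m + 1))" unfolding \<delta>_def by (rule min.cobounded1, rule min.cobounded2)
    have b: "min (\<rho>/2) \<delta>f \<le> \<rho>/2" "min (\<rho>/2) \<delta>f \<le> \<delta>f" by (rule min.cobounded1, rule min.cobounded2)
    show "\<delta> \<le> \<epsilon> / (4*(c + 2*m + 1))" "\<delta> \<le> \<rho>/2" "\<delta> \<le> \<delta>f" using a b by linarith+
  qed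
  show ?thesis
  proof (intro exI[of _ \<delta>] conjI ballI allI impI subsetI \<delta>)
    fix w r y assume w: "w \<in> ball z \<delta>" and r: "0<r" "r\<le>\<delta>" and y: "y \<in> ball (f w) (c*r)"
    define D where "D = norm (y - f w)"
    have D: "D < c*r" "0 \<le> D" using y by (auto simp: D_def dist_norm norm_minus_commute)
    define e where "e x = f x - h x" for x
    define stp where "stp x = (SOME x'. h x' = y - e x \<and> norm (x' - x) \<le> norm (y - e x - h x) / c1)" for x
    define X where "X = rec_nat w (\<lambda>_ x. stp x)"
    have X0: "X 0 = w" and XS: "X (Suc k) = stp (X k)" for k by (simp_all add: X_def)
    have geo: "(D/c1) * (\<Sum>j<k. q^j) \<le> D/(c1 - m)" for k
    proof -
      have "(D/c1) * (\<Sum>j<k. q^j) \<le> (D/c1) / (1 - q)" using geo_bound[OF q, of "D/c1" k] D c1 by simp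
      also have "\<dots> = D/(c1 - m)" using c1 by (simp add: q_def field_simps)
      finally show ?thesis .
    qed
    have Dr: "D/(c1-m) < r"
    proof -
      have "D < (c1 - m) * r" using D(1) mult_strict_right_mono[of c "c1 - m" r] c1 r by linarith
      then show ?thesis using c1 by (simp add: divide_less_eq mult.commute)
    qed
    have wz: "norm (w - z) < \<delta>" using w by (simp add: dist_norm norm_minus_commute)
    have inU: "x \<in> U" if "norm (x - w) < r" for x
    proof -
      have "norm (x - z) \<le> norm (x - w) + norm (w - z)" by (metis norm_diff_triangle_le order_refl)
      also have "\<dots> < \<rho>" using that wz r \<delta>le by linarith
      finally show ?thesis using \<rho> by (auto simp: dist_norm norm_minus_commute)
    qed
    have elip': "norm (e x1 - e x2) \<le> m * norm (x1 - x2)" if "x1 \<in> U" "x2 \<in> U" for x1 x2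
      using elip that by (simp add: e_def)
    have inV: "y - e x \<in> V" if "norm (x - w) < r" for x
    proof -
      have eq: "y - e x - h z = (y - f w) + (f w - f z) + (e z - e x)" by (simp add: e_def)
      have n1: "norm (y - f w) \<le> \<epsilon>/4"
      proof -
        have "norm (y - f w) < c * \<delta>" using D(1) mult_left_mono[OF r(2), of c] c unfolding D_def by linarith
        also have "c * \<delta> \<le> c * (\<epsilon> / (4*(c + 2*m + 1)))" using c \<delta>le by (intro mult_left_mono) auto
        also have "\<dots> \<le> \<epsilon>/4" using c m \<epsilon> by (simp add: field_simps)
        finally show ?thesis by simp
      qed
      have n2: "norm (f w - f z) < \<epsilon>/4" using \<delta>f wz \<delta>le by (simp add: dist_norm)
      have xz: "norm (z - x) < 2 * \<delta>"
        using norm_triangle_lt[of "z - w" "w - x"] that wz r by (simp add: norm_minus_commute)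
      have n3: "norm (e z - e x) \<le> \<epsilon>/4"
      proof -
        have "norm (e z - e x) \<le> m * norm (z - x)" using elip' U inU that by blast
        also have "\<dots> \<le> m * (2*\<delta>)" using xz m by (simp add: mult_left_mono)
        also have "\<dots> \<le> m * (2*(\<epsilon> / (4*(c + 2*m + 1))))" using m \<delta>le by (intro mult_left_mono) auto
        also have "\<dots> \<le> \<epsilon>/4" using c m \<epsilon> by (simp add: field_simps)
        finally show ?thesis .
      qed
      have "norm (y - e x - h z) < \<epsilon>"
        unfolding eq using norm_triangle_ineq[of "(y - f w) + (f w - f z)" "e z - e x"]
          norm_triangle_ineq[of "y - f w" "f w - f z"] n1 n2 n3 \<epsilon>(1) by linarith
      then show ?thesis using \<epsilon> by (auto simp: dist_norm norm_minus_commute)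
    qed
    have spec: "h (X (Suc k)) = y - e (X k) \<and> norm (X (Suc k) - X k) \<le> norm (y - f (X k)) / c1"
      if "norm (X k - w) < r" for k
    proof -
      have "\<exists>x'. h x' = y - e (X k) \<and> norm (x' - X k) \<le> norm (y - e (X k) - h (X k)) / c1"
        using step[OF inU[OF that] inV[OF that]] .
      then have "h (stp (X k)) = y - e (X k) \<and> norm (stp (X k) - X k) \<le> norm (y - e (X k) - h (X k)) / c1"
        unfolding stp_def by (rule someI_ex)
      then show ?thesis by (simp add: XS e_def)
    qed
    have inv: "norm (X k - w) \<le> (D/c1) * (\<Sum>j<k. q^j) \<and> norm (y - f (X k)) \<le> q^k * D" for k
    proof (induction k)
      case 0 then show ?case by (simp add: X0 D_def)
    next
      case (Suc k)
      have lt: "norm (X k - w) < r" using Suc geo[of k] Dr by linarith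
      note sp = spec[OF lt]
      have d1: "norm (X (Suc k) - X k) \<le> (D/c1) * q^k"
      proof -
        have "norm (X (Suc k) - X k) \<le> norm (y - f (X k)) / c1" using sp by blast
        also have "\<dots> \<le> q^k * D / c1" using Suc c1 by (simp add: divide_right_mono)
        finally show ?thesis by (simp add: mult.commute)
      qed
      have a1: "norm (X (Suc k) - w) \<le> (D/c1) * (\<Sum>j<Suc k. q^j)"
      proof -
        have "norm (X (Suc k) - w) \<le> norm (X (Suc k) - X k) + norm (X k - w)"
          by (metis norm_diff_triangle_le order_refl)
        also have "\<dots> \<le> (D/c1) * q^k + (D/c1) * (\<Sum>j<k. q^j)" using d1 Suc by linarith
        also have "\<dots> = (D/c1) * (\<Sum>j<Suc k. q^j)" by (simp add: algebra_simps)
        finally show ?thesis .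
      qed
      have lt2: "norm (X (Suc k) - w) < r" using a1 geo[of "Suc k"] Dr by linarith
      have "y - f (X (Suc k)) = e (X k) - e (X (Suc k))" using sp by (simp add: e_def algebra_simps)
      then have "norm (y - f (X (Suc k))) \<le> m * norm (X k - X (Suc k))"
        using elip'[OF inU[OF lt] inU[OF lt2]] by simp
      also have "\<dots> \<le> m * ((D/c1) * q^k)" using d1 m by (intro mult_left_mono) (simp_all add: norm_minus_commute)
      also have "\<dots> = q^Suc k * D" by (simp add: q_def)
      finally show ?case using a1 by simp
    qed
    have lt: "norm (X k - w) < r" for k using inv[of k] geo[of k] Dr by linarith
    have d1: "norm (X (Suc k) - X k) \<le> (D/c1) * q^k" for k
    proof -
      have "norm (X (Suc k) - X k) \<le> norm (y - f (X k)) / c1" using spec[OF lt] by blast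
      also have "\<dots> \<le> q^k * D / c1" using inv c1 by (simp add: divide_right_mono)
      finally show ?thesis by (simp add: mult.commute)
    qed
    have sg: "summable (\<lambda>k. (D/c1) * q^k)" using q by (simp add: summable_mult summable_geometric)
    have "summable (\<lambda>k. norm (X (Suc k) - X k))"
      using summable_norm_comparison_test[of "\<lambda>k. X (Suc k) - X k" "\<lambda>k. (D/c1) * q^k"] d1 sg by blast
    then have "summable (\<lambda>k. X (Suc k) - X k)" by (rule summable_norm_cancel)
    then have "(\<lambda>n. \<Sum>k<n. X (Suc k) - X k) \<longlonglongrightarrow> (\<Sum>k. X (Suc k) - X k)" by (rule summable_LIMSEQ)
    then have "(\<lambda>n. w + (\<Sum>k<n. X (Suc k) - X k)) \<longlonglongrightarrow> w + (\<Sum>k. X (Suc k) - X k)"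
      by (intro tendsto_add tendsto_const)
    then have XL: "X \<longlonglongrightarrow> w + (\<Sum>k. X (Suc k) - X k)"
      by (simp add: sum_lessThan_telescope X0)
    define xs where "xs = w + (\<Sum>k. X (Suc k) - X k)"
    have fX: "(\<lambda>n. f (X n)) \<longlonglongrightarrow> f xs"
      using continuous_on_tendsto_compose[OF contf XL[folded xs_def]] by simp
    have "(\<lambda>n. f (X n) - y) \<longlonglongrightarrow> 0"
    proof (rule Lim_null_comparison)
      show "\<forall>\<^sub>F n in sequentially. norm (f (X n) - y) \<le> q^n * D"
        using inv by (simp add: norm_minus_commute)
      show "(\<lambda>n. q^n * D) \<longlonglongrightarrow> 0" using q by (intro tendsto_mult_left_zero LIMSEQ_power_zero) auto
    qed
    then have yl: "(\<lambda>n. f (X n)) \<longlonglongrightarrow> y" by (rule LIM_zero_cancel)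
    have fxs: "f xs = y" using LIMSEQ_unique[OF fX yl] .
    have "(\<lambda>n. norm (X n - w)) \<longlonglongrightarrow> norm (xs - w)"
      using XL[folded xs_def] by (intro tendsto_intros)
    moreover have "\<exists>N. \<forall>n\<ge>N. norm (X n - w) \<le> D/(c1 - m)"
    proof (intro exI[of _ 0] allI impI)
      fix n :: nat
      show "norm (X n - w) \<le> D/(c1 - m)" using inv[of n] geo[of n] by linarith
    qed
    ultimately have "norm (xs - w) \<le> D/(c1 - m)" by (rule LIMSEQ_le_const2)
    then have "xs \<in> ball w r" using Dr by (simp add: dist_norm norm_minus_commute)
    then show "y \<in> f ` ball w r" using fxs by blast
  qed
qed

definition Qp :: "('a::euclidean_space \<Rightarrow> 'a) \<Rightarrow> real \<Rightarrow> 'a \<Rightarrow> real \<Rightarrow> bool" where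
  "Qp f c z \<delta> \<longleftrightarrow> (\<forall>x1\<in>ball z \<delta>. \<forall>x2\<in>ball z \<delta>. c * norm (x1 - x2) \<le> norm (f x1 - f x2)) \<and>
     (\<forall>w\<in>ball z \<delta>. \<forall>r. 0 < r \<longrightarrow> r \<le> \<delta> \<longrightarrow> ball (f w) (c*r) \<subseteq> f ` ball w r)"

lemma Qp_mono:
  assumes "Qp f c z \<delta>" "dist z z' + \<delta>' \<le> \<delta>"
  shows "Qp f c z' \<delta>'"
proof -
  have sub: "ball z' \<delta>' \<subseteq> ball z \<delta>"
  proof
    fix v assume "v \<in> ball z' \<delta>'"
    then have "dist z' v < \<delta>'" by simp
    then show "v \<in> ball z \<delta>" using assms(2) dist_triangle[of z v z'] by simp
  qed
  have "\<delta>' \<le> \<delta>" using assms(2) zero_le_dist[of z z'] by linarith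
  then show ?thesis using assms(1) sub unfolding Qp_def by (meson order_trans subsetD)
qed

lemma Qp_uniform:
  assumes loc: "\<And>z. \<exists>\<delta>>0. Qp f c z \<delta>" and K: "compact K"
  shows "\<exists>\<delta>>0. \<forall>z\<in>K. Qp f c z \<delta>"
proof (cases "K = {}")
  case True then show ?thesis by (intro exI[of _ 1]) auto
next
  case False
  obtain d where d: "\<And>z. d z > 0 \<and> Qp f c z (d z)" using loc by metis
  have "K \<subseteq> \<Union> ((\<lambda>z. ball z (d z / 2)) ` K)" using d by force
  then obtain T where T: "T \<subseteq> K" "finite T" "K \<subseteq> \<Union> ((\<lambda>z. ball z (d z / 2)) ` T)"
    using compactE_image[OF K, of K "\<lambda>z. ball z (d z / 2)"] by blast
  have Tne: "T \<noteq> {}" using T False by auto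
  define \<delta> where "\<delta> = Min ((\<lambda>z. d z / 2) ` T)"
  have \<delta>pos: "\<delta> > 0" using T Tne d by (simp add: \<delta>_def)
  show ?thesis
  proof (intro exI[of _ \<delta>] conjI ballI \<delta>pos)
    fix w assume "w \<in> K"
    then obtain t where t: "t \<in> T" "w \<in> ball t (d t / 2)" using T by blast
    have "\<delta> \<le> d t / 2" using t T unfolding \<delta>_def by (intro Min_le) auto
    then have "dist t w + \<delta> \<le> d t" using t by simp
    then show "Qp f c w \<delta>" using Qp_mono d by blast
  qed
qed

definition chain :: "('a::euclidean_space \<Rightarrow> 'a) \<Rightarrow> 'a \<Rightarrow> 'a \<Rightarrow> nat \<Rightarrow> real \<Rightarrow> (nat \<Rightarrow> 'a) \<Rightarrow> bool" where
  "chain f x y N r X \<longleftrightarrow> X 0 = x \<and> (\<forall>k<N. f (X (Suc k)) = f x + (real (Suc k) / real N) *\<^sub>R (y - f x)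
      \<and> norm (X (Suc k) - X k) < r)"

lemma steps_dist:
  assumes "X 0 = x" "\<forall>j<k. norm (X (Suc j) - X j) < r"
  shows "norm (X k - x) \<le> real k * r"
  using assms(2)
proof (induction k)
  case 0 then show ?case using assms(1) by simp
next
  case (Suc k)
  have "norm (X (Suc k) - x) \<le> norm (X (Suc k) - X k) + norm (X k - x)"
    by (metis norm_diff_triangle_le order_refl)
  also have "\<dots> \<le> r + real k * r"
  proof -
    have "norm (X (Suc k) - X k) < r" using Suc.prems by simp
    moreover have "norm (X k - x) \<le> real k * r" using Suc by simp
    ultimately show ?thesis by simp
  qed
  finally show ?case by (simp add: algebra_simps)
qed

lemma chain_dist:
  assumes "chain f x y N r X" "k \<le> N"
  shows "norm (X k - x) \<le> real k * r"
  using assms by (intro steps_dist) (auto simp: chain_def)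

lemma chain_end:
  assumes "chain f x y N r X" "N > 0"
  shows "f (X N) = y"
proof -
  obtain k where "N = Suc k" using assms(2) not0_implies_Suc by blast
  then show ?thesis using assms(1) unfolding chain_def by auto
qed

lemma chain_exists:
  fixes f :: "'a::euclidean_space \<Rightarrow> 'a"
  assumes Q: "\<forall>z\<in>cball x R. Qp f c z \<delta>" and r: "0 < r" "r \<le> \<delta>" and N: "N > 0" "real N * r \<le> R"
    and c: "0 < c" and y: "norm (y - f x) < real N * c * r"
  shows "\<exists>X. chain f x y N r X"
proof -
  define t where "t j = f x + (real j / real N) *\<^sub>R (y - f x)" for j
  define X where "X = rec_nat x (\<lambda>k xk. SOME w. f w = t (Suc k) \<and> norm (w - xk) < r)"
  have X0: "X 0 = x" and XS: "X (Suc k) = (SOME w. f w = t (Suc k) \<and> norm (w - X k) < r)" for k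
    by (simp_all add: X_def)
  have tdiff: "norm (t (Suc k) - t k) < c * r" for k
  proof -
    have "t (Suc k) - t k = (real (Suc k) / real N - real k / real N) *\<^sub>R (y - f x)"
      by (simp add: t_def scaleR_diff_left)
    also have "real (Suc k) / real N - real k / real N = 1 / real N" by (simp add: diff_divide_distrib[symmetric])
    finally have "t (Suc k) - t k = (1 / real N) *\<^sub>R (y - f x)" .
    then have "norm (t (Suc k) - t k) = norm (y - f x) / real N" using N by simp
    also have "\<dots> < c * r" using y N by (simp add: divide_less_eq mult.commute mult.left_commute)
    finally show ?thesis .
  qed
  have P: "\<forall>j<k. f (X (Suc j)) = t (Suc j) \<and> norm (X (Suc j) - X j) < r" if "k \<le> N" for k
    using that
  proof (induction k)
    case 0 then show ?case by simp
  next
    case (Suc k)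
    then have IH: "\<forall>j<k. f (X (Suc j)) = t (Suc j) \<and> norm (X (Suc j) - X j) < r" by simp
    have fk: "f (X k) = t k"
    proof (cases k)
      case 0 then show ?thesis by (simp add: X0 t_def)
    next
      case (Suc j) then show ?thesis using IH by simp
    qed
    have "norm (X k - x) \<le> real k * r" using steps_dist[of X x k r] IH X0 by simp
    also have "\<dots> \<le> real N * r" using Suc.prems r by (intro mult_right_mono) auto
    finally have "X k \<in> cball x R" using N by (simp add: dist_norm norm_minus_commute)
    then have Qk: "Qp f c (X k) \<delta>" using Q by blast
    have "t (Suc k) \<in> ball (f (X k)) (c * r)"
      using tdiff fk by (simp add: dist_norm norm_minus_commute)
    moreover have "ball (f (X k)) (c*r) \<subseteq> f ` ball (X k) r"
      using Qk r unfolding Qp_def by (meson centre_in_ball order_less_le_trans)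
    ultimately obtain w where "w \<in> ball (X k) r" "f w = t (Suc k)" by auto
    then have "\<exists>w. f w = t (Suc k) \<and> norm (w - X k) < r" by (auto simp: dist_norm norm_minus_commute)
    then have "f (X (Suc k)) = t (Suc k) \<and> norm (X (Suc k) - X k) < r"
      unfolding XS by (rule someI_ex)
    then show ?case using IH less_Suc_eq by auto
  qed
  show ?thesis using P[of N] X0 by (intro exI[of _ X]) (simp add: chain_def t_def)
qed

lemma chain_fdiff:
  assumes X: "chain f x y N r X" and X': "chain f x' y N r X'" and k: "k < N"
  shows "norm (f (X (Suc k)) - f (X' (Suc k))) \<le> norm (f x - f x')"
proof -
  define s where "s = real (Suc k) / real N"
  have s: "0 \<le> s" "s \<le> 1" using k by (auto simp: s_def)
  have "f (X (Suc k)) - f (X' (Suc k)) = (f x + s *\<^sub>R (y - f x)) - (f x' + s *\<^sub>R (y - f x'))"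
    using X X' k by (simp add: chain_def s_def)
  also have "\<dots> = (1 - s) *\<^sub>R (f x - f x')" by (simp add: algebra_simps)
  finally have "norm (f (X (Suc k)) - f (X' (Suc k))) = \<bar>1 - s\<bar> * norm (f x - f x')" by simp
  also have "\<dots> \<le> norm (f x - f x')" using s by (simp add: mult_left_le_one_le)
  finally show ?thesis .
qed

lemma chain_compare:
  assumes Q: "\<forall>z\<in>K. Qp f c z \<delta>" and c: "0 < c" and r: "3*r \<le> \<delta>"
    and X: "chain f x y N r X" and X': "chain f x' y N r X'" and N: "N > 0"
    and inK: "\<forall>k\<le>N. X k \<in> K"
    and close: "norm (x - x') < \<delta>/3" "norm (f x - f x') < c*\<delta>/3"
  shows "X N = X' N"
proof -
  have \<delta>: "\<delta> > 0" using close(1) norm_ge_zero[of "x - x'"] by linarith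
  have P: "norm (X k - X' k) < \<delta>/3" if "k \<le> N" for k
    using that
  proof (induction k)
    case 0 then show ?case using X X' close by (simp add: chain_def)
  next
    case (Suc k)
    have kN: "k < N" using Suc by simp
    have s1: "norm (X (Suc k) - X k) < r" using X kN by (simp add: chain_def)
    have s2: "norm (X' (Suc k) - X' k) < r" using X' kN by (simp add: chain_def)
    have IH: "norm (X k - X' k) < \<delta>/3" using Suc by simp
    have "norm (X (Suc k) - X' (Suc k)) \<le> norm (X (Suc k) - X k) + norm (X k - X' k) + norm (X' k - X' (Suc k))"
      using norm_triangle_ineq[of "X (Suc k) - X k" "X k - X' k"]
        norm_triangle_ineq[of "(X (Suc k) - X k) + (X k - X' k)" "X' k - X' (Suc k)"] by simp
    also have "\<dots> < \<delta>" using s1 s2 IH r by (simp add: norm_minus_commute)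
    finally have "X' (Suc k) \<in> ball (X (Suc k)) \<delta>" by (simp add: dist_norm)
    moreover have "X (Suc k) \<in> ball (X (Suc k)) \<delta>" using \<delta> by simp
    moreover have "Qp f c (X (Suc k)) \<delta>" using Q inK Suc.prems by blast
    ultimately have "c * norm (X (Suc k) - X' (Suc k)) \<le> norm (f (X (Suc k)) - f (X' (Suc k)))"
      unfolding Qp_def by blast
    also have "\<dots> \<le> norm (f x - f x')" using chain_fdiff[OF X X' kN] .
    also have "\<dots> < c * (\<delta>/3)" using close by simp
    finally show ?case using c by simp
  qed
  have "X' N \<in> ball (X N) \<delta>" using P[of N] \<delta> by (simp add: dist_norm)
  moreover have "X N \<in> ball (X N) \<delta>" using \<delta> by simp
  moreover have "Qp f c (X N) \<delta>" using Q inK by blast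
  ultimately have "c * norm (X N - X' N) \<le> norm (f (X N) - f (X' N))"
    unfolding Qp_def by blast
  also have "\<dots> = 0" using chain_end[OF X N] chain_end[OF X' N] by simp
  finally show ?thesis using c by (simp add: mult_le_0_iff)
qed

lemma global_open:
  fixes f :: "'a::euclidean_space \<Rightarrow> 'a"
  assumes loc: "\<And>z. \<exists>\<delta>>0. Qp f c z \<delta>" and c: "0 < c" and \<rho>: "norm (y - f x) < c * \<rho>"
  shows "\<exists>x'. f x' = y \<and> norm (x' - x) \<le> \<rho>"
proof -
  have "0 < c * \<rho>" using \<rho> norm_ge_zero[of "y - f x"] by linarith
  then have \<rho>0: "\<rho> > 0" using c by (simp add: zero_less_mult_iff)
  obtain \<delta> where \<delta>: "\<delta> > 0" "\<forall>z\<in>cball x \<rho>. Qp f c z \<delta>"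
    using Qp_uniform[OF loc compact_cball] by blast
  obtain N :: nat where N: "\<rho>/\<delta> < real N" using reals_Archimedean2 by blast
  have "\<rho>/\<delta> > 0" using \<rho>0 \<delta> by simp
  then have "real N > 0" using N by linarith
  then have N0: "N > 0" by simp
  define r where "r = \<rho> / real N"
  have r: "0 < r" "r \<le> \<delta>" using N N0 \<rho>0 \<delta> by (auto simp: r_def field_simps)
  have Nr: "real N * r = \<rho>" using N0 by (simp add: r_def)
  have y: "norm (y - f x) < real N * c * r" using \<rho> Nr by (simp add: mult.commute mult.left_commute)
  obtain X where X: "chain f x y N r X"
    using chain_exists[OF \<delta>(2) r N0 _ c y] Nr by auto
  show ?thesis
    using chain_end[OF X N0] chain_dist[OF X, of N] Nr by (intro exI[of _ "X N"]) auto
qed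

lemma global_inj:
  fixes f :: "'a::euclidean_space \<Rightarrow> 'a"
  assumes contf: "continuous_on UNIV f" and loc: "\<And>z. \<exists>\<delta>>0. Qp f c z \<delta>" and c: "0 < c"
    and fab: "f a = f b"
  shows "a = b"
proof -
  define L where "L = norm (b - a)"
  define y0 where "y0 = f a"
  have "compact (f ` cball a L)"
    by (rule compact_continuous_image[OF continuous_on_subset[OF contf] compact_cball]) auto
  then obtain B0 where B0: "\<forall>v\<in>f ` cball a L. norm v \<le> B0"
    using compact_imp_bounded bounded_iff by metis
  define B where "B = B0 + norm y0"
  have B: "norm (f z - y0) \<le> B" if "z \<in> cball a L" for z
    using B0 that norm_triangle_ineq4[of "f z" y0] unfolding B_def by force
  have "a \<in> cball a L" by (simp add: L_def)
  then have "norm (f a - y0) \<le> B" by (rule B)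
  then have B0pos: "0 \<le> B" using norm_ge_zero[of "f a - y0"] by linarith
  define \<rho> where "\<rho> = (B + 1) / c"
  have \<rho>: "\<rho> > 0" "c * \<rho> = B + 1" using B0pos c by (auto simp: \<rho>_def)
  define K where "K = cball a (L + \<rho>)"
  obtain \<delta> where \<delta>: "\<delta> > 0" "\<forall>z\<in>K. Qp f c z \<delta>"
    using Qp_uniform[OF loc compact_cball] unfolding K_def by blast
  obtain N :: nat where N: "3 * \<rho> / \<delta> < real N" using reals_Archimedean2 by blast
  have "3 * \<rho> / \<delta> > 0" using \<rho> \<delta> by simp
  then have "real N > 0" using N by linarith
  then have N0: "N > 0" by simp
  define r where "r = \<rho> / real N"
  have r: "0 < r" "3 * r \<le> \<delta>" using N N0 \<rho> \<delta> by (auto simp: r_def field_simps)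
  have Nr: "real N * r = \<rho>" using N0 by (simp add: r_def)
  have subK: "cball x \<rho> \<subseteq> K" if "x \<in> cball a L" for x
  proof
    fix z assume "z \<in> cball x \<rho>"
    then show "z \<in> K" using that dist_triangle[of a z x] by (simp add: K_def)
  qed
  have ex: "\<exists>X. chain f x y0 N r X" if "x \<in> cball a L" for x
  proof (rule chain_exists[OF _ r(1) _ N0 _ c])
    show "\<forall>z\<in>cball x \<rho>. Qp f c z \<delta>" using \<delta> subK[OF that] by blast
    show "r \<le> \<delta>" using r by simp
    show "real N * r \<le> \<rho>" using Nr by simp
    show "norm (y0 - f x) < real N * c * r"
      using B[OF that] \<rho> Nr by (simp add: norm_minus_commute mult.commute mult.left_commute)
  qed
  have inK: "\<forall>k\<le>N. X k \<in> K" if "x \<in> cball a L" "chain f x y0 N r X" for x X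
  proof (intro allI impI)
    fix k assume k: "k \<le> N"
    have "norm (X k - x) \<le> real k * r" using chain_dist[OF that(2) k] .
    also have "\<dots> \<le> real N * r" using k r by (intro mult_right_mono) auto
    finally have "X k \<in> cball x \<rho>" using Nr by (simp add: dist_norm norm_minus_commute)
    then show "X k \<in> K" using subK[OF that(1)] by blast
  qed
  have "uniformly_continuous_on (cball a L) f"
    by (rule compact_uniformly_continuous[OF continuous_on_subset[OF contf] compact_cball]) auto
  moreover have "c * \<delta> / 3 > 0" using c \<delta> by simp
  ultimately obtain \<eta> where \<eta>: "\<eta> > 0"
    "\<forall>u\<in>cball a L. \<forall>v\<in>cball a L. dist v u < \<eta> \<longrightarrow> dist (f v) (f u) < c * \<delta> / 3"
    unfolding uniformly_continuous_on_def by metis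
  have cmp: "X N = X' N" if "x \<in> cball a L" "x' \<in> cball a L" "norm (x - x') < min \<eta> (\<delta>/3)"
    "chain f x y0 N r X" "chain f x' y0 N r X'" for x x' X X'
  proof (rule chain_compare[OF \<delta>(2) c r(2) that(4) that(5) N0 inK[OF that(1) that(4)]])
    show "norm (x - x') < \<delta> / 3" using that(3) by simp
    show "norm (f x - f x') < c * \<delta> / 3"
      using \<eta>(2) that(1,2,3) by (simp add: dist_norm)
  qed
  have const: "chain f x y0 N r (\<lambda>_. x)" if "f x = y0" for x
    using that r by (simp add: chain_def)
  have "min \<eta> (\<delta>/3) > 0" using \<eta> \<delta> by simp
  then obtain M :: nat where M: "L / min \<eta> (\<delta>/3) < real M" using reals_Archimedean2 by blast
  have "L / min \<eta> (\<delta>/3) \<ge> 0" using \<open>min \<eta> (\<delta>/3) > 0\<close> by (simp add: L_def)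
  then have M0: "M > 0" using M by (metis of_nat_0_less_iff order_le_less_trans)
  have LM: "L / real M < min \<eta> (\<delta>/3)"
  proof -
    have "L < real M * min \<eta> (\<delta>/3)"
      using M pos_divide_less_eq[of "min \<eta> (\<delta>/3)" L "real M"] \<open>min \<eta> (\<delta>/3) > 0\<close> by simp
    then show ?thesis using pos_divide_less_eq[of "real M" L "min \<eta> (\<delta>/3)"] M0
      by (simp add: mult.commute)
  qed
  define \<gamma> where "\<gamma> i = a + (real i / real M) *\<^sub>R (b - a)" for i
  have \<gamma>in: "\<gamma> i \<in> cball a L" if "i \<le> M" for i
  proof -
    have "norm (\<gamma> i - a) = (real i / real M) * L" by (simp add: \<gamma>_def L_def)
    also have "\<dots> \<le> L"
    proof -
      have "real i / real M \<le> 1" using that M0 by simp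
      then show ?thesis using mult_left_le_one_le[of L "real i / real M"] by (simp add: L_def)
    qed
    finally show ?thesis by (simp add: dist_norm norm_minus_commute)
  qed
  have \<gamma>step: "norm (\<gamma> (Suc i) - \<gamma> i) = L / real M" for i
  proof -
    have "\<gamma> (Suc i) - \<gamma> i = (real (Suc i) / real M - real i / real M) *\<^sub>R (b - a)"
      by (simp add: \<gamma>_def scaleR_diff_left)
    also have "real (Suc i) / real M - real i / real M = 1 / real M" by (simp add: diff_divide_distrib[symmetric])
    finally show ?thesis by (simp add: L_def)
  qed
  have claim: "\<forall>X. chain f (\<gamma> i) y0 N r X \<longrightarrow> X N = a" if "i \<le> M" for i
    using that
  proof (induction i)
    case 0
    have g0: "\<gamma> 0 = a" by (simp add: \<gamma>_def)
    show ?case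
    proof (intro allI impI)
      fix X assume X: "chain f (\<gamma> 0) y0 N r X"
      have "a \<in> cball a L" by (simp add: L_def)
      then show "X N = a"
        using cmp[of a a X "\<lambda>_. a"] X const[of a] g0 \<open>min \<eta> (\<delta>/3) > 0\<close> by (simp add: y0_def)
    qed
  next
    case (Suc i)
    have IH: "\<forall>X. chain f (\<gamma> i) y0 N r X \<longrightarrow> X N = a" using Suc by simp
    show ?case
    proof (intro allI impI)
      fix X assume X: "chain f (\<gamma> (Suc i)) y0 N r X"
      obtain X' where X': "chain f (\<gamma> i) y0 N r X'" using ex[OF \<gamma>in[of i]] Suc.prems by auto
      have "norm (\<gamma> (Suc i) - \<gamma> i) < min \<eta> (\<delta>/3)" using \<gamma>step LM by simp
      then have "X N = X' N" using cmp[OF \<gamma>in[OF Suc.prems] \<gamma>in[of i] _ X X'] Suc.prems by simp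
      then show "X N = a" using IH X' by simp
    qed
  qed
  have gM: "\<gamma> M = b" using M0 by (simp add: \<gamma>_def)
  have "chain f (\<gamma> M) y0 N r (\<lambda>_. b)" using const[of b] gM fab by (simp add: y0_def)
  then show ?thesis using claim[of M] by simp
qed

lemma half_between: fixes a b :: real assumes "a < b" shows "a < (a+b)/2" "(a+b)/2 < b"
proof -
  show "a < (a+b)/2" using assms by (simp add: field_simps)
  show "(a+b)/2 < b" using assms by (simp add: field_simps)
qed

lemma Qp_from:
  assumes d1: "\<delta>1 > 0" "\<forall>w\<in>ball z \<delta>1. \<forall>r. 0 < r \<longrightarrow> r \<le> \<delta>1 \<longrightarrow> ball (f w) (c*r) \<subseteq> f ` ball w r"
    and d2: "\<delta>2 > 0" "inj_on f (ball z \<delta>2)" and c: "0 < c"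
  shows "\<exists>\<delta>>0. Qp f c z \<delta>"
proof -
  define \<delta> where "\<delta> = min \<delta>1 \<delta>2 / 3"
  have m1: "min \<delta>1 \<delta>2 \<le> \<delta>1" "min \<delta>1 \<delta>2 \<le> \<delta>2" by (rule min.cobounded1, rule min.cobounded2)
  have m2: "min \<delta>1 \<delta>2 > 0" using d1(1) d2(1) by simp
  have \<delta>: "\<delta> > 0" "3 * \<delta> \<le> \<delta>1" "3 * \<delta> \<le> \<delta>2" using m1 m2 unfolding \<delta>_def by simp_all
  have sub1: "ball z \<delta> \<subseteq> ball z \<delta>1" using \<delta> by (intro subset_ball) linarith
  have inj: "c * norm (x1 - x2) \<le> norm (f x1 - f x2)" if x: "x1 \<in> ball z \<delta>" "x2 \<in> ball z \<delta>" for x1 x2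
  proof (rule ccontr)
    assume "\<not> ?thesis"
    then have lt: "norm (f x1 - f x2) < c * norm (x1 - x2)" by simp
    define d where "d = norm (f x1 - f x2)"
    define r where "r = (d / c + norm (x1 - x2)) / 2"
    have dc: "d / c < norm (x1 - x2)" using lt c by (simp add: d_def divide_less_eq mult.commute)
    have r1a: "d / c < r" using half_between[OF dc] unfolding r_def by simp
    have r1b: "r < norm (x1 - x2)" using half_between[OF dc] unfolding r_def by simp
    note r1 = r1a r1b
    have d0: "0 \<le> d / c" using c by (simp add: d_def)
    have rpos: "0 < r" using r1 d0 by linarith
    have dx1: "dist z x1 < \<delta>" using x(1) by simp
    have dx2: "dist z x2 < \<delta>" using x(2) by simp
    have "dist x1 x2 < 2 * \<delta>" using dist_triangle[of x1 x2 z] dx1 dx2 dist_commute[of x1 z] by linarith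
    then have x12: "norm (x1 - x2) < 2 * \<delta>" by (simp add: dist_norm)
    have rle: "r \<le> \<delta>1" using r1 x12 \<delta> by linarith
    have "d < c * r" using r1 c by (simp add: divide_less_eq mult.commute)
    then have fx2: "f x2 \<in> ball (f x1) (c * r)" by (simp add: d_def dist_norm)
    have x1in: "x1 \<in> ball z \<delta>1" using sub1 x(1) by (rule subsetD)
    have sub: "ball (f x1) (c * r) \<subseteq> f ` ball x1 r" by (rule d1(2)[rule_format, OF x1in rpos rle])
    have "f x2 \<in> f ` ball x1 r" by (rule subsetD[OF sub fx2])
    then obtain w where w: "w \<in> ball x1 r" "f w = f x2" by (metis imageE)
    have "dist z w \<le> dist z x1 + dist x1 w" by (rule dist_triangle)
    also have "\<dots> < \<delta> + 2 * \<delta>"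
    proof -
      have "dist x1 w < r" using w(1) by simp
      then show ?thesis using dx1 r1 x12 by linarith
    qed
    finally have "dist z w < \<delta>2" using \<delta> by linarith
    then have "w \<in> ball z \<delta>2" by simp
    moreover have "dist z x2 < \<delta>2" using dx2 \<delta> by linarith
    then have "x2 \<in> ball z \<delta>2" by simp
    ultimately have "w = x2" by (rule inj_onD[OF d2(2) w(2)])
    then have "dist x1 x2 < r" using w(1) by simp
    then show False using r1 by (simp add: dist_norm)
  qed
  have "Qp f c z \<delta>" unfolding Qp_def
  proof (rule conjI)
    show "\<forall>x1\<in>ball z \<delta>. \<forall>x2\<in>ball z \<delta>. c * norm (x1 - x2) \<le> norm (f x1 - f x2)"
      using inj by blast
    show "\<forall>w\<in>ball z \<delta>. \<forall>r. 0 < r \<longrightarrow> r \<le> \<delta> \<longrightarrow> ball (f w) (c * r) \<subseteq> f ` ball w r"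
    proof (intro ballI allI impI)
      fix w r assume a: "w \<in> ball z \<delta>" "0 < r" "r \<le> \<delta>"
      have "w \<in> ball z \<delta>1" using sub1 a(1) by (rule subsetD)
      moreover have "r \<le> \<delta>1" using a(3) \<delta> by linarith
      ultimately show "ball (f w) (c * r) \<subseteq> f ` ball w r" using d1(2)[rule_format, OF _ a(2)] by simp
    qed
  qed
  then show ?thesis using \<delta>(1) by blast
qed

lemma inj_from_est:
  fixes f g :: "'a::euclidean_space \<Rightarrow> 'a"
  assumes se: "strict_estimator f g eta z" and ib: "inj_bound g z > ereal eta"
  shows "\<exists>\<delta>>0. inj_on f (ball z \<delta>)"
proof -
  from ib obtain \<beta> where \<beta>: "\<beta> > eta" "\<beta> > 0"
      "\<exists>\<delta>>0. \<forall>x1\<in>cball z \<delta>. \<forall>x2\<in>cball z \<delta>. norm (g x1 - g x2) \<ge> \<beta> * norm (x1 - x2)"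
    unfolding inj_bound_def less_Sup_iff by auto
  obtain \<delta>g where \<delta>g: "\<delta>g > 0" "\<forall>x1\<in>cball z \<delta>g. \<forall>x2\<in>cball z \<delta>g. norm (g x1 - g x2) \<ge> \<beta> * norm (x1 - x2)"
    using \<beta>(3) by blast
  have "lip_mod (\<lambda>x. f x - g x) z \<le> ereal eta" using se unfolding strict_estimator_def by blast
  moreover have "ereal eta < ereal \<beta>" using \<beta>(1) by simp
  ultimately have "lip_mod (\<lambda>x. f x - g x) z < ereal \<beta>" by (rule le_less_trans)
  then obtain l U where l: "l < \<beta>" "open U" "z \<in> U"
      "\<forall>x1\<in>U. \<forall>x2\<in>U. norm ((f x1 - g x1) - (f x2 - g x2)) \<le> l * norm (x1 - x2)"
    unfolding lip_mod_def Inf_less_iff by auto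
  obtain \<delta>u where \<delta>u: "\<delta>u > 0" "ball z \<delta>u \<subseteq> U" using l(2,3) open_contains_ball by blast
  define \<delta> where "\<delta> = min \<delta>g \<delta>u"
  have \<delta>: "\<delta> > 0" "\<delta> \<le> \<delta>g" "\<delta> \<le> \<delta>u" using \<delta>g(1) \<delta>u(1) by (simp_all add: \<delta>_def)
  have "inj_on f (ball z \<delta>)"
  proof (rule inj_onI)
    fix x1 x2 assume x1: "x1 \<in> ball z \<delta>" and x2: "x2 \<in> ball z \<delta>" and fe: "f x1 = f x2"
    have c1: "x1 \<in> cball z \<delta>g" "x2 \<in> cball z \<delta>g" using x1 x2 \<delta> by simp_all
    have u1: "x1 \<in> U" "x2 \<in> U" using x1 x2 \<delta> \<delta>u(2) by auto
    have "\<beta> * norm (x1 - x2) \<le> norm (g x1 - g x2)" using \<delta>g(2) c1 by blast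
    also have "g x1 - g x2 = - ((f x1 - g x1) - (f x2 - g x2))" using fe by (simp add: algebra_simps)
    then have "norm (g x1 - g x2) = norm ((f x1 - g x1) - (f x2 - g x2))" by (metis norm_minus_cancel)
    also have "\<dots> \<le> l * norm (x1 - x2)" using l(4) u1 by blast
    finally have "(\<beta> - l) * norm (x1 - x2) \<le> 0" by (simp add: algebra_simps)
    then have "norm (x1 - x2) \<le> 0" using l(1) by (simp add: mult_le_0_iff)
    then show "x1 = x2" by simp
  qed
  then show ?thesis using \<delta>(1) by blast
qed

lemma loc_Q:
  fixes f :: "'a::euclidean_space \<Rightarrow> 'a" and h :: "'a \<Rightarrow> 'a \<Rightarrow> 'a"
  assumes contf: "continuous_on UNIV f" and est_h: "\<And>x. strict_estimator f (h x) mu x"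
    and injf: "\<And>x. \<exists>\<delta>>0. inj_on f (ball x \<delta>)"
    and sig: "ereal (c + mu) < (INF x. lop (h x) x)" and c: "0 < c" and mu: "0 \<le> mu"
  shows "\<exists>\<delta>>0. Qp f c z \<delta>"
proof -
  obtain \<beta> where \<beta>: "ereal (c + mu) < ereal \<beta>" "ereal \<beta> < (INF x. lop (h x) x)"
    using ereal_dense2[OF sig] by blast
  have \<beta>0: "\<beta> > 0" "c + mu < \<beta>" using \<beta>(1) c mu by simp_all
  have "(INF x. lop (h x) x) \<le> lop (h z) z" by (rule INF_lower) simp
  then have "ereal \<beta> < lop (h z) z" using \<beta>(2) by simp
  then obtain \<alpha> U V where \<alpha>: "\<beta> < \<alpha>" "\<alpha> > 0" "open U" "z \<in> U" "open V" "h z z \<in> V"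
      "\<forall>x\<in>U. \<forall>r>0. ball (h z x) (\<alpha> * r) \<inter> V \<subseteq> h z ` ball x r"
    using \<beta>0(1) unfolding lop_def less_Sup_iff by auto
  have "lip_mod (\<lambda>x. f x - h z x) z \<le> ereal mu" using est_h[of z] unfolding strict_estimator_def by blast
  moreover have "ereal mu < ereal (\<beta> - c)" using \<beta>0 by simp
  ultimately have "lip_mod (\<lambda>x. f x - h z x) z < ereal (\<beta> - c)" by (rule le_less_trans)
  then obtain l U' where l: "l > 0" "l < \<beta> - c" "open U'" "z \<in> U'"
      "\<forall>x1\<in>U'. \<forall>x2\<in>U'. norm ((f x1 - h z x1) - (f x2 - h z x2)) \<le> l * norm (x1 - x2)"
    unfolding lip_mod_def Inf_less_iff by auto
  have "\<exists>\<delta>>0. \<forall>w\<in>ball z \<delta>. \<forall>r. 0 < r \<longrightarrow> r \<le> \<delta> \<longrightarrow> ball (f w) (c*r) \<subseteq> f ` ball w r"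
  proof (rule pert[where f=f and U="U \<inter> U'" and z=z and V=V and h="h z" and \<alpha>=\<alpha> and m=l and c=c])
    show "continuous_on UNIV f" using contf .
    show "open V" using \<alpha>(5) .
    show "h z z \<in> V" using \<alpha>(6) .
    show "0 < \<alpha>" using \<alpha>(2) .
    show "open (U \<inter> U')" using \<alpha>(3) l(3) by blast
    show "z \<in> U \<inter> U'" using \<alpha>(4) l(4) by blast
    show "\<forall>x\<in>U \<inter> U'. \<forall>r>0. ball (h z x) (\<alpha> * r) \<inter> V \<subseteq> h z ` ball x r" using \<alpha>(7) by blast
    show "\<forall>x1\<in>U \<inter> U'. \<forall>x2\<in>U \<inter> U'. norm (f x1 - h z x1 - (f x2 - h z x2)) \<le> l * norm (x1 - x2)"
      using l(5) by blast
    show "0 \<le> l" using l(1) by simp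
    show "0 < c" using c .
    show "c + l < \<alpha>" using l(2) \<alpha>(1) by linarith
  qed
  then obtain \<delta>1 where d1: "\<delta>1 > 0" "\<forall>w\<in>ball z \<delta>1. \<forall>r. 0 < r \<longrightarrow> r \<le> \<delta>1 \<longrightarrow> ball (f w) (c*r) \<subseteq> f ` ball w r"
    by blast
  obtain \<delta>2 where d2: "\<delta>2 > 0" "inj_on f (ball z \<delta>2)" using injf by blast
  show ?thesis by (rule Qp_from[OF d1 d2 c])
qed

lemma lim_bound_inf:
  fixes a d :: real assumes d: "0 \<le> d" and H: "\<And>c. 0 < c \<Longrightarrow> a \<le> d / c"
  shows "a \<le> 0"
proof (rule ccontr)
  assume "\<not> a \<le> 0"
  then have a: "a > 0" by simp
  define c where "c = 2 * (d + 1) / a"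
  have c: "c > 0" using a d by (simp add: c_def)
  have "a \<le> d / c" using H[OF c] .
  also have "d / c = d * a / (2 * (d + 1))" using a d by (simp add: c_def field_simps)
  finally have "a * (2 * (d + 1)) \<le> d * a" using d by (simp add: field_simps)
  then have "a * (2 * (d + 1)) \<le> a * d" by (simp add: mult.commute)
  then have "2 * (d + 1) \<le> d" using mult_le_cancel_left_pos[OF a] by blast
  then show False using d by (simp add: algebra_simps)
qed

lemma lim_bound_fin:
  fixes a d T :: real assumes d: "0 \<le> d" and T: "0 < T" and H: "\<And>c. 0 < c \<Longrightarrow> c < T \<Longrightarrow> a \<le> d / c"
  shows "a \<le> d / T"
proof (rule ccontr)
  assume "\<not> a \<le> d / T"
  then have lt: "d / T < a" by simp
  have dT: "0 \<le> d / T" using d T by simp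
  have a: "a > 0" using lt dT by linarith
  have "d < a * T" using lt T by (simp add: divide_less_eq)
  then have da: "d / a < T" using a by (simp add: divide_less_eq mult.commute)
  define c where "c = (d / a + T) / 2"
  have c1: "d / a < c" "c < T" using half_between[OF da] by (simp_all add: c_def)
  have "0 \<le> d / a" using d a by simp
  then have c0: "0 < c" using c1 by linarith
  have "d < a * c" using c1(1) a by (simp add: divide_less_eq mult.commute)
  then have "d / c < a" using c0 by (simp add: divide_less_eq mult.commute)
  moreover have "a \<le> d / c" using H[OF c0 c1(2)] .
  ultimately show False by simp
qed

theorem mainTheorem3:
  fixes f :: "real ^ 'n \<Rightarrow> real ^ 'n" and mu :: real
    and g h :: "real ^ 'n \<Rightarrow> real ^ 'n \<Rightarrow> real ^ 'n" and eta :: "real ^ 'n \<Rightarrow> real"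
  assumes mu_nonneg: "mu \<ge> 0"
    and cont: "continuous_on UNIV f"
    and est_g: "\<And>x. eta x \<ge> 0 \<and> strict_estimator f (g x) (eta x) x
                 \<and> metrically_injective (g x) x \<and> inj_bound (g x) x > ereal (eta x)"
    and est_h: "\<And>x. strict_estimator f (h x) mu x"
    and sigma: "(INF x. lop (h x) x) > ereal mu"
  shows "bij f \<and>
    (\<forall>y1 y2. ereal (norm (inv f y1 - inv f y2))
        \<le> ereal (norm (y1 - y2)) / ((INF x. lop (h x) x) - ereal mu))"
proof -
  define \<sigma> where "\<sigma> = (INF x. lop (h x) x)"
  have injf: "\<exists>\<delta>>0. inj_on f (ball x \<delta>)" for x
    using inj_from_est est_g[of x] by blast
  have loc: "\<exists>\<delta>>0. Qp f c z \<delta>" if "0 < c" "ereal (c + mu) < \<sigma>" for c z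
    using loc_Q[OF cont est_h injf, of c] that mu_nonneg by (simp add: \<sigma>_def)
  obtain t where t: "ereal mu < ereal t" "ereal t < \<sigma>" using ereal_dense2 sigma unfolding \<sigma>_def by blast
  define c0 where "c0 = t - mu"
  have c0: "0 < c0" "ereal (c0 + mu) < \<sigma>" using t by (simp_all add: c0_def)
  have inj: "inj f"
  proof (rule inj_onI)
    fix a b assume "f a = f b"
    then show "a = b" using global_inj[OF cont loc[OF c0] c0(1)] by blast
  qed
  have surj: "surj f"
  proof -
    have "\<exists>x. f x = y" for y
    proof -
      have "norm (y - f 0) < c0 * (norm (y - f 0) / c0 + 1)" using c0(1) by (simp add: field_simps)
      then show ?thesis using global_open[OF loc[OF c0] c0(1)] by blast
    qed
    then show ?thesis by (metis surjI)
  qed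
  have bj: "bij f" using inj surj by (simp add: bij_def)
  have bound: "norm (inv f y1 - inv f y2) \<le> norm (y1 - y2) / c"
    if cc: "0 < c" "ereal (c + mu) < \<sigma>" for c y1 y2
  proof (rule dense_ge)
    fix \<rho> assume \<rho>: "norm (y1 - y2) / c < \<rho>"
    define x1 where "x1 = inv f y1"
    have fx1: "f x1 = y1" using surj by (simp add: x1_def surj_f_inv_f)
    have "norm (y2 - f x1) < c * \<rho>" using \<rho> cc(1) fx1
      by (simp add: divide_less_eq norm_minus_commute mult.commute)
    then obtain x' where x': "f x' = y2" "norm (x' - x1) \<le> \<rho>"
      using global_open[OF loc[OF cc]] cc(1) by blast
    have "inv f y2 = x'" using x'(1) inv_f_f[OF inj] by blast
    then show "norm (inv f y1 - inv f y2) \<le> \<rho>" using x'(2) by (simp add: x1_def norm_minus_commute)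
  qed
  have final: "ereal (norm (inv f y1 - inv f y2)) \<le> ereal (norm (y1 - y2)) / (\<sigma> - ereal mu)" for y1 y2
  proof (cases \<sigma>)
    case (real s)
    have s: "mu < s" using sigma real by (simp add: \<sigma>_def)
    have "norm (inv f y1 - inv f y2) \<le> norm (y1 - y2) / (s - mu)"
    proof (rule lim_bound_fin)
      show "0 \<le> norm (y1 - y2)" by simp
      show "0 < s - mu" using s by simp
      fix c assume "0 < c" "c < s - mu"
      then show "norm (inv f y1 - inv f y2) \<le> norm (y1 - y2) / c" using bound real by simp
    qed
    then show ?thesis using real s by simp
  next
    case PInf
    have "norm (inv f y1 - inv f y2) \<le> 0"
    proof (rule lim_bound_inf)
      show "0 \<le> norm (y1 - y2)" by simp
      fix c :: real assume "0 < c"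
      then show "norm (inv f y1 - inv f y2) \<le> norm (y1 - y2) / c" using bound PInf by simp
    qed
    then show ?thesis using PInf by simp
  next
    case MInf
    then show ?thesis using sigma by (simp add: \<sigma>_def)
  qed
  show ?thesis using bj final unfolding \<sigma>_def by blast
qed

end
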